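(* Assume the setting of the context. Let $m\geq 0$ and $0\le k<hl^m$, and write $k=\sum_{i=0}^m k_il^i$ with $0\le k_m<h$ and $0\le k_i<l$ for $0\le i<m$. Then $$\{y_{k+nhl^m} : n\in\mathbb Z\}=\phi(\mathcal C),$$ where $\mathcal C$ is the terminal vertex of the (unique) walk in $G(\sigma)$ that starts at $\mathcal A_{k_m}$ and successively follows edges labelled $k_{m-1},k_{m-2},\dots,k_0$.
   Context: Let $\sigma:\mathcal A^*\to\mathcal A^*$ be a primitive substitution of constant length $l\ge2$ ($|\sigma(a)|=l$ for all $a$), $x\in\mathcal A^{\mathbb Z}$ an admissible two-sided fixed point of $\sigma$ (so $x_{lj+i}=\sigma(x_j)_i$ for $j\in\mathbb Z$, $0\le i<l$, where $w_i$ denotes the $i$-th letter of $w$ indexed from $0$), $\phi:\mathcal A\to\mathcal B$ a coding, $y=\phi(x)$; $(X,S)$ is the subshift generated by $x$, assumed non-periodic. The height is $h=\max\{n\ge1 : \gcd(n,l)=1,\ n \mid g_0\}$ where $g_0=\gcd\{n\ge1 : x_n=x_0\}$. For $0\le i<h$, $\mathcal A_i=\{x_{i+nh}:n\in\mathbb Z\}$; these sets partition $\mathcal A$. The graph $G(\sigma)$: vertices are subsets of $\mathcal A$; for a subset $\mathcal C$ and $0\le i<l$ there is an edge labelled $i$ from $\mathcal C$ to $\{\sigma(b)_i : b\in\mathcal C\}$; $G(\sigma)$ is restricted to the vertices reachable from $\mathcal A_0,\dots,\mathcal A_{h-1}$. For $\mathcal C\subseteq\mathcal A$, $\phi(\mathcal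 C)=\{\phi(c):c\in\mathcal C\}$. *)

theory Defs
  imports Main
begin

definition subst_word :: "('a \<Rightarrow> 'a list) \<Rightarrow> 'a list \<Rightarrow> 'a list" where
  "subst_word \<sigma> w = concat (map \<sigma> w)"

definition subst_iter :: "('a \<Rightarrow> 'a list) \<Rightarrow> nat \<Rightarrow> 'a list \<Rightarrow> 'a list" where
  "subst_iter \<sigma> n = (subst_word \<sigma> ^^ n)"

definition constant_length :: "('a \<Rightarrow> 'a list) \<Rightarrow> nat \<Rightarrow> bool" where
  "constant_length \<sigma> l \<longleftrightarrow> (\<forall>a. length (\<sigma> a) = l)"

definition primitive :: "('a \<Rightarrow> 'a list) \<Rightarrow> bool" where
  "primitive \<sigma> \<longleftrightarrow> (\<exists>n\<ge>1. \<forall>a b. b \<in> set (subst_iter \<sigma> n [a]))"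

definition is_fixed_point :: "('a \<Rightarrow> 'a list) \<Rightarrow> nat \<Rightarrow> (int \<Rightarrow> 'a) \<Rightarrow> bool" where
  "is_fixed_point \<sigma> l x \<longleftrightarrow>
     (\<forall>j::int. \<forall>i<l. x (int l * j + int i) = \<sigma> (x j) ! i)"

definition admissible :: "('a \<Rightarrow> 'a list) \<Rightarrow> (int \<Rightarrow> 'a) \<Rightarrow> bool" where
  "admissible \<sigma> x \<longleftrightarrow>
     (\<exists>n a u v. subst_iter \<sigma> n [a] = u @ [x (-1), x 0] @ v)"

definition subshift_of :: "(int \<Rightarrow> 'a) \<Rightarrow> (int \<Rightarrow> 'a) set" where
  "subshift_of x = {z. \<forall>(i::int) (n::nat). \<exists>j::int. \<forall>t<n. z (i + int t) = x (j + int t)}"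

definition periodic_seq :: "(int \<Rightarrow> 'a) \<Rightarrow> bool" where
  "periodic_seq z \<longleftrightarrow> (\<exists>p::int. p > 0 \<and> (\<forall>n. z (n + p) = z n))"

definition nonperiodic_subshift :: "(int \<Rightarrow> 'a) \<Rightarrow> bool" where
  "nonperiodic_subshift x \<longleftrightarrow> (\<forall>z\<in>subshift_of x. \<not> periodic_seq z)"

definition g0 :: "(int \<Rightarrow> 'a) \<Rightarrow> nat" where
  "g0 x = Gcd {n::nat. n \<ge> 1 \<and> x (int n) = x 0}"

definition height :: "nat \<Rightarrow> (int \<Rightarrow> 'a) \<Rightarrow> nat" where
  "height l x = (GREATEST n::nat. n \<ge> 1 \<and> coprime n l \<and> n dvd g0 x)"

definition A_class :: "nat \<Rightarrow> (int \<Rightarrow> 'a) \<Rightarrow> nat \<Rightarrow> 'a set" where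
  "A_class h x i = {x (int i + n * int h) | n::int. True}"

text \<open>Edge labelled i in G(sigma) from vertex C.\<close>
definition G_step :: "('a \<Rightarrow> 'a list) \<Rightarrow> 'a set \<Rightarrow> nat \<Rightarrow> 'a set" where
  "G_step \<sigma> C i = (\<lambda>b. \<sigma> b ! i) ` C"

definition walk_end :: "('a \<Rightarrow> 'a list) \<Rightarrow> 'a set \<Rightarrow> nat list \<Rightarrow> 'a set" where
  "walk_end \<sigma> C ls = foldl (G_step \<sigma>) C ls"

end

theory Submission
  imports Defs
begin

lemma rev_upt_Suc: "rev [0..<Suc m] = map Suc (rev [0..<m]) @ [0]"
  by (simp add: upt_conv_Cons map_Suc_upt[symmetric] rev_map del: upt_Suc)

lemma key:
  assumes fp: "is_fixed_point \<sigma> l x"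
  shows "\<forall>i<m. kd i < l \<Longrightarrow>
    {x (int (\<Sum>i\<le>m. kd i * l ^ i) + n * int h * int l ^ m) | n::int. True}
     = walk_end \<sigma> (A_class h x (kd m)) (map kd (rev [0..<m]))"
proof (induction m arbitrary: kd)
  case 0
  then show ?case by (simp add: walk_end_def A_class_def)
next
  case (Suc m)
  define kd' where "kd' = (\<lambda>i. kd (Suc i))"
  define s' where "s' = (\<Sum>i\<le>m. kd' i * l ^ i)"
  have lt: "\<forall>i<m. kd' i < l" using Suc.prems by (simp add: kd'_def)
  have IH: "{x (int s' + n * int h * int l ^ m) | n::int. True}
     = walk_end \<sigma> (A_class h x (kd' m)) (map kd' (rev [0..<m]))"
    using Suc.IH[OF lt] by (simp add: s'_def)
  have k0: "kd 0 < l" using Suc.prems by simp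
  have sum: "(\<Sum>i\<le>Suc m. kd i * l ^ i) = kd 0 + l * s'"
    by (simp add: sum.atMost_Suc_shift s'_def kd'_def sum_distrib_left mult.assoc mult.left_commute
        del: sum.atMost_Suc)
  have eq: "x (int (\<Sum>i\<le>Suc m. kd i * l ^ i) + n * int h * int l ^ Suc m)
      = \<sigma> (x (int s' + n * int h * int l ^ m)) ! kd 0" for n
  proof -
    have "int (\<Sum>i\<le>Suc m. kd i * l ^ i) + n * int h * int l ^ Suc m
        = int l * (int s' + n * int h * int l ^ m) + int (kd 0)"
      by (simp only: sum of_nat_add of_nat_mult) (simp add: algebra_simps)
    then show ?thesis using fp k0 unfolding is_fixed_point_def by metis
  qed
  have "{x (int (\<Sum>i\<le>Suc m. kd i * l ^ i) + n * int h * int l ^ Suc m) | n::int. True}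
      = (\<lambda>b. \<sigma> b ! kd 0) ` {x (int s' + n * int h * int l ^ m) | n::int. True}"
    unfolding eq by blast
  also have "\<dots> = walk_end \<sigma> (A_class h x (kd (Suc m))) (map kd (rev [0..<Suc m]))"
    unfolding IH rev_upt_Suc by (simp add: walk_end_def G_step_def kd'_def comp_def)
  finally show ?case .
qed

theorem mainTheorem13:
  fixes \<sigma> :: "'a::finite \<Rightarrow> 'a list"
    and l :: nat
    and x :: "int \<Rightarrow> 'a"
    and \<phi> :: "'a \<Rightarrow> 'b"
    and m k :: nat
    and kd :: "nat \<Rightarrow> nat"
  assumes "l \<ge> 2"
    and "constant_length \<sigma> l"
    and "primitive \<sigma>"
    and "is_fixed_point \<sigma> l x"
    and "admissible \<sigma> x"
    and "nonperiodic_subshift x"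
    and "k < height l x * l ^ m"
    and "k = (\<Sum>i\<le>m. kd i * l ^ i)"
    and "kd m < height l x"
    and "\<forall>i<m. kd i < l"
  shows "{\<phi> (x (int k + n * int (height l x) * int l ^ m)) | n::int. True}
         = \<phi> ` walk_end \<sigma> (A_class (height l x) x (kd m)) (map kd (rev [0..<m]))"
proof -
  have E: "{x (int k + n * int (height l x) * int l ^ m) | n::int. True}
     = walk_end \<sigma> (A_class (height l x) x (kd m)) (map kd (rev [0..<m]))"
    using key[OF assms(4) assms(10), of "height l x"] assms(8) by simp
  show ?thesis unfolding E[symmetric] by blast
qed

end
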